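(* There is an absolute constant $\alpha$ such that for every rule $\mathcal{R}$, every finite $X\subseteq\mathbb{R}^d$, all $k\ge2,\ell\ge1$, and every optimal cluster $K$, when general $k$-means++ with rule $\mathcal{R}$ is run on $X$ with parameters $k,\ell$, we have $\mathbb{E}[\mathrm{HIT}(K)]\le\alpha\,\ell\,k^{1-1/\ell}$.
   Context: $\phi(x,C)=\min_{c\in C}\|x-c\|_2^2$ ($\phi(x,\emptyset)=\infty$), $\phi(Y,C)=\sum_{x\in Y}\phi(x,C)$. A rule $\mathcal{R}$ selects one of $\ell$ given candidate points (given access to $X$, current centers, $k$, $\ell$). General $k$-means++ with rule $\mathcal{R}$: $C_0=\emptyset$; sample $c_1^1,\dots,c_1^\ell$ independently uniformly from $X$, $\mathcal{R}$ selects $c_1$ among them, $C_1=\{c_1\}$; for $i=1,\dots,k-1$ sample $c_{i+1}^1,\dots,c_{i+1}^\ell\in X$ independently with $\Pr[c_{i+1}^j=x]=\phi(x,C_i)/\phi(X,C_i)$, $\mathcal{R}$ selects $c_{i+1}$ among them, $C_{i+1}=C_i\cup\{c_{i+1}\}$. An optimal cluster $K$ is the set of points of $X$ whose closest center in a fixed optimal $k$-means solution is a given center; $\mu(K)$ is its centroid and $\phi^*(K)=\phi(K,\{\mu(K)\})$. $K$ is covered w.r.t. $C$ if $K\cap C\neq\emptyset$, solved w.r.t. $C$ if $\phi(K,C)\le10^5\phi^*(K)$. $\mathrm{HIT}(K)=\sum_{i=0}^{k-1}\sum_{j=1}^\ell \mathbf{1}[c_{i+1}^j\in K$ and $K$ is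 neither covered nor solved w.r.t. $C_i]$. *)

theory Defs
  imports "HOL-Probability.Probability"
begin

text \<open>Points of R^d are represented as functions nat => real vanishing outside {..<d},
  so that the dimension d can be quantified inside the statement.\<close>

type_synonym pt = "nat \<Rightarrow> real"

definition in_Rd :: "nat \<Rightarrow> pt \<Rightarrow> bool" where
  "in_Rd d x \<longleftrightarrow> (\<forall>i\<ge>d. x i = 0)"

definition sqd :: "nat \<Rightarrow> pt \<Rightarrow> pt \<Rightarrow> real" where
  "sqd d x y = (\<Sum>i<d. (x i - y i)^2)"

definition phi_pt :: "nat \<Rightarrow> pt \<Rightarrow> pt set \<Rightarrow> real" where
  "phi_pt d x C = Min (sqd d x ` C)"

definition phi :: "nat \<Rightarrow> pt set \<Rightarrow> pt set \<Rightarrow> real" where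
  "phi d Y C = (\<Sum>x\<in>Y. phi_pt d x C)"

definition opt_solution :: "nat \<Rightarrow> pt set \<Rightarrow> nat \<Rightarrow> pt set \<Rightarrow> bool" where
  "opt_solution d X k Opt \<longleftrightarrow> finite Opt \<and> Opt \<noteq> {} \<and> card Opt \<le> k \<and> (\<forall>c\<in>Opt. in_Rd d c) \<and>
     (\<forall>C. finite C \<and> C \<noteq> {} \<and> card C \<le> k \<and> (\<forall>c\<in>C. in_Rd d c) \<longrightarrow> phi d X Opt \<le> phi d X C)"

text \<open>An optimal cluster: the points of X assigned to a given center ctr of a fixed optimal
  solution Opt, each point being assigned to one of its closest centers (asg breaks ties).\<close>
definition opt_cluster :: "nat \<Rightarrow> pt set \<Rightarrow> nat \<Rightarrow> pt set \<Rightarrow> bool" where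
  "opt_cluster d X k K \<longleftrightarrow> (\<exists>Opt asg ctr. opt_solution d X k Opt \<and>
     (\<forall>x\<in>X. asg x \<in> Opt \<and> sqd d x (asg x) = phi_pt d x Opt) \<and>
     ctr \<in> Opt \<and> K = {x\<in>X. asg x = ctr})"

definition centroid :: "nat \<Rightarrow> pt set \<Rightarrow> pt" where
  "centroid d K = (\<lambda>i. if i < d then (\<Sum>x\<in>K. x i) / real (card K) else 0)"

definition phi_star :: "nat \<Rightarrow> pt set \<Rightarrow> real" where
  "phi_star d K = (\<Sum>x\<in>K. sqd d x (centroid d K))"

definition covered :: "pt set \<Rightarrow> pt set \<Rightarrow> bool" where
  "covered K C \<longleftrightarrow> K \<inter> C \<noteq> {}"

text \<open>phi(K,{}) = infinity, so K is never solved w.r.t. the empty set.\<close>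
definition solved :: "nat \<Rightarrow> pt set \<Rightarrow> pt set \<Rightarrow> bool" where
  "solved d K C \<longleftrightarrow> C \<noteq> {} \<and> phi d K C \<le> 10^5 * phi_star d K"

text \<open>When phi(X,C) = 0 the D^2
  distribution is undefined; we then (by convention) sample uniformly -- this does not affect HIT,
  since then every nonempty cluster is covered.\<close>
definition d2_dist :: "nat \<Rightarrow> pt set \<Rightarrow> pt set \<Rightarrow> pt pmf" where
  "d2_dist d X C = (if C = {} \<or> phi d X C = 0 then pmf_of_set X
     else embed_pmf (\<lambda>x. if x \<in> X then phi_pt d x C / phi d X C else 0))"

fun iid_list :: "nat \<Rightarrow> 'a pmf \<Rightarrow> 'a list pmf" where
  "iid_list 0 p = return_pmf []"
| "iid_list (Suc n) p = bind_pmf p (\<lambda>x. map_pmf (\<lambda>xs. x # xs) (iid_list n p))"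

type_synonym rule = "pt set \<Rightarrow> pt set \<Rightarrow> nat \<Rightarrow> nat \<Rightarrow> pt list \<Rightarrow> pt"

definition valid_rule :: "rule \<Rightarrow> pt set \<Rightarrow> nat \<Rightarrow> nat \<Rightarrow> bool" where
  "valid_rule R X k l \<longleftrightarrow> (\<forall>C cs. length cs = l \<longrightarrow> R X C k l cs \<in> set cs)"

text \<open>One round: state is (current centers, HIT count so far).\<close>
definition kpp_step :: "nat \<Rightarrow> rule \<Rightarrow> pt set \<Rightarrow> nat \<Rightarrow> nat \<Rightarrow> pt set \<Rightarrow> pt set \<times> nat \<Rightarrow> (pt set \<times> nat) pmf" where
  "kpp_step d R X k l K s = (case s of (C, h) \<Rightarrow>
     map_pmf (\<lambda>cs. (insert (R X C k l cs) C,
                    h + (if covered K C \<or> solved d K C then 0 else length (filter (\<lambda>c. c \<in> K) cs))))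
       (iid_list l (d2_dist d X C)))"

fun kpp_run :: "nat \<Rightarrow> rule \<Rightarrow> pt set \<Rightarrow> nat \<Rightarrow> nat \<Rightarrow> pt set \<Rightarrow> nat \<Rightarrow> (pt set \<times> nat) pmf" where
  "kpp_run d R X k l K 0 = return_pmf ({}, 0)"
| "kpp_run d R X k l K (Suc i) = bind_pmf (kpp_run d R X k l K i) (kpp_step d R X k l K)"

definition expected_HIT :: "nat \<Rightarrow> rule \<Rightarrow> pt set \<Rightarrow> nat \<Rightarrow> nat \<Rightarrow> pt set \<Rightarrow> real" where
  "expected_HIT d R X k l K = measure_pmf.expectation (kpp_run d R X k l K k) (\<lambda>s. real (snd s))"

end

theory Submission
  imports Defs
begin

lemma integrable_pmf_bdd:
  fixes f :: "'a \<Rightarrow> real"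
  assumes "\<And>y. y \<in> set_pmf M \<Longrightarrow> \<bar>f y\<bar> \<le> Bd"
  shows "integrable (measure_pmf M) f"
  by (rule measure_pmf.integrable_const_bound[where B=Bd]) (auto intro!: AE_pmfI assms)

lemma integral_bind_pmf_bdd:
  fixes f :: "'b \<Rightarrow> real"
  assumes bd: "\<And>x y. x \<in> set_pmf M \<Longrightarrow> y \<in> set_pmf (N x) \<Longrightarrow> \<bar>f y\<bar> \<le> Bd"
  shows "measure_pmf.expectation (bind_pmf M N) f
       = measure_pmf.expectation M (\<lambda>x. measure_pmf.expectation (N x) f)"
proof -
  define g where "g = (\<lambda>y. max (- \<bar>Bd\<bar>) (min \<bar>Bd\<bar> (f y)))"
  have gb: "\<bar>g y\<bar> \<le> \<bar>Bd\<bar>" for y unfolding g_def by auto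
  have fg: "g y = f y" if "x \<in> set_pmf M" "y \<in> set_pmf (N x)" for x y
    using bd[OF that] unfolding g_def by auto
  have "measure_pmf.expectation (bind_pmf M N) f = measure_pmf.expectation (bind_pmf M N) g"
    by (intro integral_cong_AE) (auto intro!: AE_pmfI simp: fg)
  also have "\<dots> = (\<integral>x. integral\<^sup>L (measure_pmf (N x)) g \<partial>measure_pmf M)"
    unfolding measure_pmf_bind
    by (rule integral_bind[where B="\<bar>Bd\<bar>" and K="count_space UNIV" and B'=1])
       (auto simp: gb measure_pmf.prob_space_axioms prob_space_imp_subprob_space space_subprob_algebra
             intro!: prob_space.finite_measure AE_pmfI)
  also have "\<dots> = measure_pmf.expectation M (\<lambda>x. measure_pmf.expectation (N x) f)"
    by (intro integral_cong_AE) (auto intro!: AE_pmfI integral_cong_AE simp: fg)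
  finally show ?thesis .
qed

lemma iid_len: "xs \<in> set_pmf (iid_list n p) \<Longrightarrow> length xs = n"
  by (induction n arbitrary: xs) auto

lemma iid_count:
  "measure_pmf.expectation (iid_list n p) (\<lambda>xs. real (length (filter (\<lambda>c. c \<in> K) xs)))
     = real n * measure_pmf.prob p K"
proof (induction n)
  case 0 then show ?case by simp
next
  case (Suc n)
  have "measure_pmf.expectation (iid_list (Suc n) p) (\<lambda>xs. real (length (filter (\<lambda>c. c \<in> K) xs)))
     = measure_pmf.expectation p (\<lambda>x. measure_pmf.expectation (iid_list n p)
          (\<lambda>xs. indicator K x + real (length (filter (\<lambda>c. c \<in> K) xs))))"
    apply (simp only: iid_list.simps)
    apply (subst integral_bind_pmf_bdd[where Bd="real (Suc n)"])
    subgoal for x y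
      by (auto dest!: iid_len) (smt (verit) length_filter_le of_nat_le_iff)
    apply (rule Bochner_Integration.integral_cong[OF refl])
    apply (simp only: integral_map_pmf)
    apply (rule Bochner_Integration.integral_cong[OF refl])
    apply (auto simp: indicator_def)
    done
  also have "\<dots> = measure_pmf.expectation p (\<lambda>x. indicator K x + real n * measure_pmf.prob p K)"
    apply (rule Bochner_Integration.integral_cong[OF refl])
    subgoal for x
    apply (subst Bochner_Integration.integral_add)
      apply (auto intro!: integrable_pmf_bdd[where Bd="real n"] dest!: iid_len simp: Suc)
    done
    done
  also have "\<dots> = real (Suc n) * measure_pmf.prob p K"
    by (subst Bochner_Integration.integral_add) (auto simp: algebra_simps indicator_def intro!: integrable_pmf_bdd[where Bd=1])
  finally show ?case .
qed

lemma iid_all: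
  "measure_pmf.expectation (iid_list n p) (\<lambda>xs. if \<forall>c\<in>set xs. c \<in> K then 1 else 0)
     = (measure_pmf.prob p K) ^ n"
proof (induction n)
  case 0 then show ?case by simp
next
  case (Suc n)
  have "measure_pmf.expectation (iid_list (Suc n) p) (\<lambda>xs. if \<forall>c\<in>set xs. c \<in> K then 1 else 0)
     = measure_pmf.expectation p (\<lambda>x. measure_pmf.expectation (iid_list n p)
          (\<lambda>xs. indicator K x * (if \<forall>c\<in>set xs. c \<in> K then 1 else 0::real)))"
    apply (simp only: iid_list.simps)
    apply (subst integral_bind_pmf_bdd[where Bd=1])
     apply auto[1]
    apply (rule Bochner_Integration.integral_cong[OF refl])
    apply (simp only: integral_map_pmf)
    apply (rule Bochner_Integration.integral_cong[OF refl])
    apply (auto simp: indicator_def)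
    done
  also have "\<dots> = measure_pmf.expectation p (\<lambda>x. indicator K x * (measure_pmf.prob p K) ^ n)"
    by (simp add: Suc)
  also have "\<dots> = (measure_pmf.prob p K) ^ Suc n"
    by simp
  finally show ?case .
qed


lemma real_ineq:
  fixes p k :: real and l :: nat
  assumes "0 \<le> p" "k > 0" "l \<ge> 1"
  shows "p \<le> k powr (- 1 / real l) + k powr (1 - 1 / real l) * p ^ l"
proof (cases "p \<le> k powr (- 1 / real l)")
  case True
  then show ?thesis using assms by (simp add: add_increasing2)
next
  case False
  define t where "t = k powr (- 1 / real l)"
  have t0: "t > 0" using assms unfolding t_def by simp
  have pt: "p > t" using False unfolding t_def by simp
  have "t ^ (l - 1) \<le> p ^ (l - 1)" using t0 pt by (intro power_mono) auto
  moreover have "t ^ (l - 1) = k powr (real (l - 1) * (- 1 / real l))"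
    unfolding t_def using assms by (simp add: powr_power)
  moreover have "k powr (1 - 1 / real l) * k powr (real (l - 1) * (- 1 / real l)) = 1"
  proof -
    have "(1 - 1 / real l) + real (l - 1) * (- 1 / real l) = 0"
      using assms by (simp add: of_nat_diff field_simps)
    then show ?thesis using assms by (simp flip: powr_add)
  qed
  ultimately have "1 \<le> k powr (1 - 1 / real l) * p ^ (l - 1)"
    by (metis mult_left_mono powr_ge_zero)
  then have "p \<le> p * (k powr (1 - 1 / real l) * p ^ (l - 1))"
    using assms by (metis mult_left_mono mult.right_neutral)
  also have "\<dots> = k powr (1 - 1 / real l) * p ^ l"
    using assms by (cases l) (auto simp: algebra_simps)
  finally show ?thesis using t0 t_def by linarith
qed

definition alive :: "nat \<Rightarrow> pt set \<Rightarrow> pt set \<Rightarrow> bool" where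
  "alive d K C \<longleftrightarrow> \<not> (covered K C \<or> solved d K C)"

lemma alive_mono:
  assumes "finite C" "\<not> alive d K C"
  shows "\<not> alive d K (insert c C)"
proof -
  have "phi d K (insert c C) \<le> phi d K C" if "C \<noteq> {}"
    unfolding phi_def phi_pt_def
    using that assms(1) by (intro sum_mono Min_antimono) auto
  then show ?thesis using assms unfolding alive_def covered_def solved_def by force
qed


lemma step_bound:
  assumes vr: "valid_rule R X k l" and fin: "finite C" and k: "real k > 0" and l: "l \<ge> 1"
    and B_def: "B = real l * real k powr (1 - 1 / real l)"
    and e_def: "e = real l * real k powr (- 1 / real l)"
  shows "measure_pmf.expectation (kpp_step d R X k l K (C, h))
           (\<lambda>s. real (snd s) + (if alive d K (fst s) then B else 0))
         \<le> real h + (if alive d K C then B else 0) + e"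
proof -
  define D where "D = d2_dist d X C"
  define p where "p = measure_pmf.prob D K"
  define cnt where "cnt = (\<lambda>cs::pt list. real (length (filter (\<lambda>c. c \<in> K) cs)))"
  define allK where "allK = (\<lambda>cs::pt list. if \<forall>c\<in>set cs. c \<in> K then 1 else (0::real))"
  define F where "F = (\<lambda>cs. real (h + (if covered K C \<or> solved d K C then 0
            else length (filter (\<lambda>c. c \<in> K) cs)))
          + (if alive d K (insert (R X C k l cs) C) then B else 0))"
  have B0: "B \<ge> 0" "e \<ge> 0" by (simp_all add: B_def e_def)
  have E: "measure_pmf.expectation (kpp_step d R X k l K (C, h))
           (\<lambda>s. real (snd s) + (if alive d K (fst s) then B else 0))
        = measure_pmf.expectation (iid_list l D) F"
    unfolding kpp_step_def F_def D_def by simp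
  have cntb: "\<bar>cnt cs\<bar> \<le> real l" if "cs \<in> set_pmf (iid_list l D)" for cs
    using iid_len[OF that] length_filter_le[of "\<lambda>c. c \<in> K" cs] unfolding cnt_def by simp
  have icnt: "integrable (measure_pmf (iid_list l D)) cnt"
    by (rule integrable_pmf_bdd[OF cntb])
  have iall: "integrable (measure_pmf (iid_list l D)) allK"
    by (rule integrable_pmf_bdd[where Bd=1]) (simp add: allK_def)
  have ecnt: "measure_pmf.expectation (iid_list l D) cnt = real l * p"
    unfolding cnt_def p_def by (rule iid_count)
  have eall: "measure_pmf.expectation (iid_list l D) allK = p ^ l"
    unfolding allK_def p_def by (rule iid_all)
  show ?thesis
  proof (cases "alive d K C")
    case False
    have "F = (\<lambda>_. real h)"
      using alive_mono[OF fin False] False unfolding F_def alive_def by (intro ext) simp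
    then have "measure_pmf.expectation (iid_list l D) F = real h" by simp
    then show ?thesis using E False B0 by simp
  next
    case True
    have bnd: "F cs \<le> real h + cnt cs + B - B * allK cs" if cs: "cs \<in> set_pmf (iid_list l D)" for cs
    proof -
      have len: "length cs = l" using iid_len[OF cs] .
      have mem: "R X C k l cs \<in> set cs" using vr len unfolding valid_rule_def by auto
      have "allK cs = 1 \<Longrightarrow> \<not> alive d K (insert (R X C k l cs) C)"
        using mem unfolding allK_def alive_def covered_def by (auto split: if_splits)
      moreover have "allK cs = 0 \<or> allK cs = 1" unfolding allK_def by simp
      ultimately show ?thesis using True B0 unfolding F_def alive_def cnt_def
        by (auto split: if_splits)
    qed
    have Fb: "\<bar>F cs\<bar> \<le> real h + real l + B" if cs: "cs \<in> set_pmf (iid_list l D)" for cs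
      using cntb[OF cs] B0 unfolding F_def cnt_def by (auto split: if_splits)
    have "measure_pmf.expectation (iid_list l D) F
       \<le> measure_pmf.expectation (iid_list l D) (\<lambda>cs. real h + cnt cs + B - B * allK cs)"
      by (intro integral_mono_AE integrable_pmf_bdd[OF Fb] AE_pmfI bnd)
         (auto intro!: Bochner_Integration.integrable_diff Bochner_Integration.integrable_add icnt iall)
    also have "\<dots> = real h + real l * p + B - B * p ^ l"
      using icnt iall ecnt eall by simp
    also have "\<dots> \<le> real h + B + e"
    proof -
      have "p \<ge> 0" unfolding p_def by simp
      from real_ineq[OF this k l] have "real l * p \<le> real l * (real k powr (- 1 / real l) + real k powr (1 - 1 / real l) * p ^ l)"
        by (intro mult_left_mono) auto
      then show ?thesis unfolding B_def e_def by (simp add: algebra_simps)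
    qed
    finally show ?thesis using E True by simp
  qed
qed



lemma step_support2:
  assumes "s' \<in> set_pmf (kpp_step d R X k l K (C, h))" "finite C"
  shows "finite (fst s') \<and> snd s' \<le> h + l"
proof -
  from assms(1) obtain cs where cs: "cs \<in> set_pmf (iid_list l (d2_dist d X C))"
    and s': "s' = (insert (R X C k l cs) C,
                    h + (if covered K C \<or> solved d K C then 0 else length (filter (\<lambda>c. c \<in> K) cs)))"
    unfolding kpp_step_def by auto
  have "length (filter (\<lambda>c. c \<in> K) cs) \<le> l"
    using iid_len[OF cs] length_filter_le[of "\<lambda>c. c \<in> K" cs] by simp
  then show ?thesis using s' assms(2) by auto
qed

lemma run_bound:
  assumes vr: "valid_rule R X k l" and k: "real k > 0" and l: "l \<ge> 1"
    and B_def: "B = real l * real k powr (1 - 1 / real l)"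
    and e_def: "e = real l * real k powr (- 1 / real l)"
    and Phi_def: "Phi = (\<lambda>s. real (snd s) + (if alive d K (fst s) then B else 0))"
  shows "(\<forall>s\<in>set_pmf (kpp_run d R X k l K n). finite (fst s) \<and> snd s \<le> n * l) \<and>
         measure_pmf.expectation (kpp_run d R X k l K n) Phi \<le> B + real n * e"
proof (induction n)
  case 0
  have "B \<ge> 0" by (simp add: B_def)
  then show ?case by (simp add: Phi_def)
next
  case (Suc n)
  have B0: "B \<ge> 0" "e \<ge> 0" by (simp_all add: B_def e_def)
  have supp: "\<forall>s\<in>set_pmf (kpp_run d R X k l K n). finite (fst s) \<and> snd s \<le> n * l"
    and IH: "measure_pmf.expectation (kpp_run d R X k l K n) Phi \<le> B + real n * e"
    using Suc by auto
  have suppr: "real (snd s) \<le> real (n * l)" if "s \<in> set_pmf (kpp_run d R X k l K n)" for s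
    using supp that by (simp only: of_nat_le_iff)
  have supp2: "finite (fst s') \<and> snd s' \<le> Suc n * l"
    if s: "s \<in> set_pmf (kpp_run d R X k l K n)" and s': "s' \<in> set_pmf (kpp_step d R X k l K s)" for s s'
  proof -
    obtain C h where sCh: "s = (C, h)" by (cases s)
    have "finite C" "h \<le> n * l" using supp s sCh by auto
    with step_support2[OF s'[unfolded sCh]] show ?thesis by auto
  qed
  have Phib: "\<bar>Phi s'\<bar> \<le> real (Suc n * l) + B" if "finite (fst s') \<and> snd s' \<le> Suc n * l" for s'
  proof -
    have "real (snd s') \<le> real (Suc n * l)" using that by (simp only: of_nat_le_iff)
    then show ?thesis using B0 unfolding Phi_def by auto
  qed
  have stepb: "measure_pmf.expectation (kpp_step d R X k l K s) Phi \<le> Phi s + e"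
    if s: "s \<in> set_pmf (kpp_run d R X k l K n)" for s
  proof -
    obtain C h where sCh: "s = (C, h)" by (cases s)
    have "finite C" using supp s sCh by auto
    from step_bound[OF vr this k l B_def e_def, of d K h] show ?thesis
      unfolding sCh Phi_def by simp
  qed
  have stepnn: "measure_pmf.expectation (kpp_step d R X k l K s) Phi \<ge> 0" for s
    using B0 unfolding Phi_def by (intro integral_nonneg_AE) auto
  have "measure_pmf.expectation (kpp_run d R X k l K (Suc n)) Phi
      = measure_pmf.expectation (kpp_run d R X k l K n)
          (\<lambda>s. measure_pmf.expectation (kpp_step d R X k l K s) Phi)"
    by (simp only: kpp_run.simps) (rule integral_bind_pmf_bdd[where Bd="real (Suc n * l) + B"], intro Phib supp2)
  also have "\<dots> \<le> measure_pmf.expectation (kpp_run d R X k l K n) (\<lambda>s. Phi s + e)"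
  proof (intro integral_mono_AE AE_pmfI stepb)
    show "integrable (measure_pmf (kpp_run d R X k l K n))
            (\<lambda>s. measure_pmf.expectation (kpp_step d R X k l K s) Phi)"
    proof (rule integrable_pmf_bdd[where Bd="real (n * l) + B + e"])
      fix s assume s: "s \<in> set_pmf (kpp_run d R X k l K n)"
      have "Phi s \<le> real (n * l) + B" using suppr[OF s] B0 unfolding Phi_def by auto
      then show "\<bar>measure_pmf.expectation (kpp_step d R X k l K s) Phi\<bar> \<le> real (n * l) + B + e"
        using stepb[OF s] stepnn[of s] by linarith
    qed
    show "integrable (measure_pmf (kpp_run d R X k l K n)) (\<lambda>s. Phi s + e)"
    proof (rule integrable_pmf_bdd[where Bd="real (n * l) + B + e"])
      fix s assume s: "s \<in> set_pmf (kpp_run d R X k l K n)"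
      have "\<bar>Phi s\<bar> \<le> real (n * l) + B" using suppr[OF s] B0 unfolding Phi_def by auto
      then show "\<bar>Phi s + e\<bar> \<le> real (n * l) + B + e" using B0 by linarith
    qed
  qed
  also have "\<dots> = measure_pmf.expectation (kpp_run d R X k l K n) Phi + e"
  proof (subst Bochner_Integration.integral_add)
    show "integrable (measure_pmf (kpp_run d R X k l K n)) Phi"
    proof (rule integrable_pmf_bdd[where Bd="real (n * l) + B"])
      fix s assume s: "s \<in> set_pmf (kpp_run d R X k l K n)"
      show "\<bar>Phi s\<bar> \<le> real (n * l) + B" using suppr[OF s] B0 unfolding Phi_def by auto
    qed
  qed auto
  also have "\<dots> \<le> B + real (Suc n) * e" using IH by (simp add: algebra_simps)
  finally have "measure_pmf.expectation (kpp_run d R X k l K (Suc n)) Phi \<le> B + real (Suc n) * e" .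
  moreover have "\<forall>s\<in>set_pmf (kpp_run d R X k l K (Suc n)). finite (fst s) \<and> snd s \<le> Suc n * l"
    using supp2 by auto
  ultimately show ?case by blast
qed


theorem lemmaB2:
  shows "\<exists>\<alpha>::real. \<forall>d (R::rule) X k l K.
     finite X \<and> X \<noteq> {} \<and> (\<forall>x\<in>X. in_Rd d x) \<and> k \<ge> 2 \<and> l \<ge> 1 \<and>
     valid_rule R X k l \<and> opt_cluster d X k K \<longrightarrow>
     expected_HIT d R X k l K \<le> \<alpha> * real l * real k powr (1 - 1 / real l)"
proof (rule exI[of _ 2], intro allI impI)
  fix d R X k l K
  assume H: "finite X \<and> X \<noteq> {} \<and> (\<forall>x\<in>X. in_Rd d x) \<and> k \<ge> 2 \<and> l \<ge> 1 \<and>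
     valid_rule R X k l \<and> opt_cluster d X k K"
  then have vr: "valid_rule R X k l" and k: "real k > 0" and l: "l \<ge> 1" by auto
  define B where "B = real l * real k powr (1 - 1 / real l)"
  define e where "e = real l * real k powr (- 1 / real l)"
  define Phi where "Phi = (\<lambda>s. real (snd s) + (if alive d K (fst s) then B else 0))"
  have B0: "B \<ge> 0" by (simp add: B_def)
  note rb = run_bound[OF vr k l B_def e_def Phi_def, of k]
  have suppr: "real (snd s) \<le> real (k * l)" if "s \<in> set_pmf (kpp_run d R X k l K k)" for s
    using rb that by (simp only: of_nat_le_iff)
  have "expected_HIT d R X k l K \<le> measure_pmf.expectation (kpp_run d R X k l K k) Phi"
    unfolding expected_HIT_def
  proof (intro integral_mono_AE AE_pmfI)
    show "integrable (measure_pmf (kpp_run d R X k l K k)) (\<lambda>s. real (snd s))"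
      by (rule integrable_pmf_bdd[where Bd="real (k * l)"]) (use suppr in \<open>simp only: abs_of_nat\<close>)
    show "integrable (measure_pmf (kpp_run d R X k l K k)) Phi"
      by (rule integrable_pmf_bdd[where Bd="real (k * l) + B"]) (use suppr B0 in \<open>fastforce simp: Phi_def\<close>)
  qed (use B0 in \<open>auto simp: Phi_def\<close>)
  also have "\<dots> \<le> B + real k * e" using rb by blast
  also have "real k * e = B"
  proof -
    have "real k powr (1 + (- 1 / real l)) = real k powr 1 * real k powr (- 1 / real l)"
      by (rule powr_add)
    moreover have "(1::real) + (- 1 / real l) = 1 - 1 / real l" by simp
    moreover have "real k powr 1 = real k" by (simp only: powr_one' abs_of_nat)
    ultimately have eq: "real k * real k powr (- 1 / real l) = real k powr (1 - 1 / real l)"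
      by simp
    show ?thesis unfolding e_def B_def by (simp only: mult.left_commute[of "real k"] eq)
  qed
  also have "B + B = 2 * real l * real k powr (1 - 1 / real l)"
    unfolding B_def by (simp only: mult.assoc mult_2[symmetric])
  finally show "expected_HIT d R X k l K \<le> 2 * real l * real k powr (1 - 1 / real l)" .
qed

end
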